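(* Let $(G,k)$ be an instance and $V_{\mathrm{ld}}$ the set of large-dense vertices. Suppose that no vertex $v\in V_{\mathrm{ld}}$ admits a collection of $k+1$ vertex sets, each contained in $V_{\mathrm{ld}}$ and inducing $P_3$, such that any two of them intersect exactly in $\{v\}$. If there is a collection $\mathcal{P}$ of more than $k^2$ vertex sets, each contained in $V_{\mathrm{ld}}$ and inducing $P_3$, such that any two members of $\mathcal{P}$ share at most one vertex, then $(G,k)$ is a no-instance.
   Context: Graphs are undirected, without self-loops, possibly with multi-edges. $N(v)$ is the set of vertices adjacent to $v$; $\rho(v)$ is the number of unordered pairs $\{u_1,u_2\}\subseteq N(v)$ joined by at least one edge. A vertex $v$ is large-dense if $|N(v)|>7k$ and $\rho(v)> |N(v)|(|N(v)|-1)/4$. A set of three distinct vertices $\{v_1,v_2,v_3\}$ induces $P_3$ if $v_1v_2$ and $v_2v_3$ are edges (possibly multi-edges) and $v_1v_3$ is not an edge. A vertex set induces a clique if between any two distinct vertices there is exactly one edge, and a tree if it is connected and acyclic (two parallel edges form a cycle). A feasible solution is $X\subseteq V$, $|X|\le k$, with every component of $G-X$ a clique or a tree; $(G,k)$ is a yes-instance if one exists. *)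

theory Defs
  imports Complex_Main
begin

text \<open>A finite undirected multigraph without self-loops: vertex set V and edge
 multiplicity function m (number of parallel edges between two vertices).\<close>

definition multigraph :: "'a set \<Rightarrow> ('a \<Rightarrow> 'a \<Rightarrow> nat) \<Rightarrow> bool" where
  "multigraph V m \<longleftrightarrow> finite V \<and> (\<forall>u v. m u v = m v u) \<and> (\<forall>v. m v v = 0)
     \<and> (\<forall>u v. m u v > 0 \<longrightarrow> u \<in> V \<and> v \<in> V)"

definition adj :: "('a \<Rightarrow> 'a \<Rightarrow> nat) \<Rightarrow> 'a \<Rightarrow> 'a \<Rightarrow> bool" where
  "adj m u v \<longleftrightarrow> m u v > 0"

definition nbhd :: "'a set \<Rightarrow> ('a \<Rightarrow> 'a \<Rightarrow> nat) \<Rightarrow> 'a \<Rightarrow> 'a set" where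
  "nbhd V m v = {u \<in> V. adj m v u}"

definition rho :: "'a set \<Rightarrow> ('a \<Rightarrow> 'a \<Rightarrow> nat) \<Rightarrow> 'a \<Rightarrow> nat" where
  "rho V m v = card {{u1, u2} | u1 u2. u1 \<in> nbhd V m v \<and> u2 \<in> nbhd V m v \<and> u1 \<noteq> u2 \<and> adj m u1 u2}"

definition large_dense :: "'a set \<Rightarrow> ('a \<Rightarrow> 'a \<Rightarrow> nat) \<Rightarrow> nat \<Rightarrow> 'a \<Rightarrow> bool" where
  "large_dense V m k v \<longleftrightarrow> v \<in> V \<and> card (nbhd V m v) > 7 * k \<and>
     real (rho V m v) > real (card (nbhd V m v)) * (real (card (nbhd V m v)) - 1) / 4"

definition V_ld :: "'a set \<Rightarrow> ('a \<Rightarrow> 'a \<Rightarrow> nat) \<Rightarrow> nat \<Rightarrow> 'a set" where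
  "V_ld V m k = {v \<in> V. large_dense V m k v}"

definition induces_P3 :: "('a \<Rightarrow> 'a \<Rightarrow> nat) \<Rightarrow> 'a set \<Rightarrow> bool" where
  "induces_P3 m S \<longleftrightarrow> (\<exists>v1 v2 v3. S = {v1, v2, v3} \<and> v1 \<noteq> v2 \<and> v2 \<noteq> v3 \<and> v1 \<noteq> v3
      \<and> adj m v1 v2 \<and> adj m v2 v3 \<and> \<not> adj m v1 v3)"

definition reach_in :: "('a \<Rightarrow> 'a \<Rightarrow> nat) \<Rightarrow> 'a set \<Rightarrow> 'a \<Rightarrow> 'a \<Rightarrow> bool" where
  "reach_in m S = (\<lambda>x y. x \<in> S \<and> y \<in> S \<and> adj m x y)\<^sup>*\<^sup>*"

definition connected_in :: "('a \<Rightarrow> 'a \<Rightarrow> nat) \<Rightarrow> 'a set \<Rightarrow> bool" where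
  "connected_in m S \<longleftrightarrow> S \<noteq> {} \<and> (\<forall>x\<in>S. \<forall>y\<in>S. reach_in m S x y)"

definition components :: "('a \<Rightarrow> 'a \<Rightarrow> nat) \<Rightarrow> 'a set \<Rightarrow> 'a set set" where
  "components m W = {{y \<in> W. reach_in m W x y} | x. x \<in> W}"

text \<open>A cycle in the multigraph induced by S: either a pair of parallel edges,
  or a closed walk through at least 3 distinct vertices.\<close>
definition has_cycle_in :: "('a \<Rightarrow> 'a \<Rightarrow> nat) \<Rightarrow> 'a set \<Rightarrow> bool" where
  "has_cycle_in m S \<longleftrightarrow>
     (\<exists>x\<in>S. \<exists>y\<in>S. x \<noteq> y \<and> m x y \<ge> 2) \<or>
     (\<exists>xs. length xs \<ge> 3 \<and> distinct xs \<and> set xs \<subseteq> S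
        \<and> (\<forall>i. Suc i < length xs \<longrightarrow> adj m (xs ! i) (xs ! Suc i))
        \<and> adj m (last xs) (hd xs))"

definition induces_clique :: "('a \<Rightarrow> 'a \<Rightarrow> nat) \<Rightarrow> 'a set \<Rightarrow> bool" where
  "induces_clique m S \<longleftrightarrow> (\<forall>x\<in>S. \<forall>y\<in>S. x \<noteq> y \<longrightarrow> m x y = 1)"

definition induces_tree :: "('a \<Rightarrow> 'a \<Rightarrow> nat) \<Rightarrow> 'a set \<Rightarrow> bool" where
  "induces_tree m S \<longleftrightarrow> connected_in m S \<and> \<not> has_cycle_in m S"

definition feasible :: "'a set \<Rightarrow> ('a \<Rightarrow> 'a \<Rightarrow> nat) \<Rightarrow> nat \<Rightarrow> 'a set \<Rightarrow> bool" where
  "feasible V m k X \<longleftrightarrow> X \<subseteq> V \<and> card X \<le> k \<and>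
     (\<forall>C \<in> components m (V - X). induces_clique m C \<or> induces_tree m C)"

definition yes_instance :: "'a set \<Rightarrow> ('a \<Rightarrow> 'a \<Rightarrow> nat) \<Rightarrow> nat \<Rightarrow> bool" where
  "yes_instance V m k \<longleftrightarrow> (\<exists>X. feasible V m k X)"

end

theory Submission
  imports Defs
begin

lemma adj_sym: "multigraph V m \<Longrightarrow> adj m u v \<Longrightarrow> adj m v u"
  unfolding multigraph_def adj_def by metis

lemma adj_irr: "multigraph V m \<Longrightarrow> adj m u v \<Longrightarrow> u \<noteq> v"
  unfolding multigraph_def adj_def by auto

lemma triangle:
  assumes mg: "multigraph V m" and ld: "large_dense V m k w" and XV: "X \<subseteq> V"
    and cX: "card X \<le> k" and wX: "w \<notin> X"
  shows "\<exists>u1 u2. u1 \<in> V - X \<and> u2 \<in> V - X \<and> adj m w u1 \<and> adj m u1 u2 \<and> adj m w u2"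
proof (rule ccontr)
  assume H: "\<not> ?thesis"
  define N where "N = nbhd V m w"
  define Pr where "Pr = {{u1, u2} | u1 u2. u1 \<in> N \<and> u2 \<in> N \<and> u1 \<noteq> u2 \<and> adj m u1 u2}"
  have finV: "finite V" using mg unfolding multigraph_def by auto
  have finN: "finite N" unfolding N_def nbhd_def using finV by auto
  have finX: "finite X" using XV finV finite_subset by auto
  have NV: "N \<subseteq> V" unfolding N_def nbhd_def by auto
  have sub: "Pr \<subseteq> (\<Union>x\<in>X. (\<lambda>u. {x,u}) ` N)"
  proof
    fix p assume "p \<in> Pr"
    then obtain u1 u2 where p: "p = {u1,u2}" "u1 \<in> N" "u2 \<in> N" "adj m u1 u2"
      unfolding Pr_def by auto
    have a1: "adj m w u1" using p(2) unfolding N_def nbhd_def by auto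
    have a2: "adj m w u2" using p(3) unfolding N_def nbhd_def by auto
    have "u1 \<in> X \<or> u2 \<in> X"
    proof (rule ccontr)
      assume "\<not> (u1 \<in> X \<or> u2 \<in> X)"
      hence "u1 \<in> V - X" "u2 \<in> V - X" using p NV by auto
      thus False using H a1 a2 p(4) by auto
    qed
    then show "p \<in> (\<Union>x\<in>X. (\<lambda>u. {x,u}) ` N)" using p by auto
  qed
  have "card Pr \<le> card (\<Union>x\<in>X. (\<lambda>u. {x,u}) ` N)"
    by (rule card_mono) (use finX finN sub in auto)
  also have "\<dots> \<le> (\<Sum>x\<in>X. card ((\<lambda>u. {x,u}) ` N))" by (rule card_UN_le[OF finX])
  also have "\<dots> \<le> (\<Sum>x\<in>X. card N)" by (rule sum_mono) (rule card_image_le[OF finN])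
  also have "\<dots> = card X * card N" by simp
  also have "\<dots> \<le> k * card N" using cX by simp
  finally have r: "rho V m w \<le> k * card N" unfolding rho_def Pr_def N_def by simp
  have n: "card N > 7 * k" and rr: "real (rho V m w) > real (card N) * (real (card N) - 1) / 4"
    using ld unfolding large_dense_def N_def by auto
  have "4 * k \<le> card N - 1" using n by simp
  hence "4 * k * card N \<le> (card N - 1) * card N" by simp
  hence "real (4 * k * card N) \<le> real ((card N - 1) * card N)" by linarith
  moreover have "real (card N - 1) = real (card N) - 1" using n by simp
  ultimately have "4 * (real k * real (card N)) \<le> (real (card N) - 1) * real (card N)"
    by simp
  moreover have "real (rho V m w) \<le> real k * real (card N)" using r
    by (metis of_nat_le_iff of_nat_mult)
  ultimately show False using rr by (simp add: field_simps)
qed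

lemma hit:
  assumes mg: "multigraph V m" and fe: "feasible V m k X"
    and S: "S \<subseteq> V_ld V m k" "induces_P3 m S"
  shows "S \<inter> X \<noteq> {}"
proof
  assume dis: "S \<inter> X = {}"
  obtain v1 v2 v3 where s: "S = {v1, v2, v3}" "adj m v1 v2" "adj m v2 v3" "\<not> adj m v1 v3" "v1 \<noteq> v3"
    using S(2) unfolding induces_P3_def by auto
  define W where "W = V - X"
  have inW: "v1 \<in> W" "v2 \<in> W" "v3 \<in> W" using S(1) dis s(1) unfolding W_def V_ld_def by auto
  define C where "C = {y \<in> W. reach_in m W v1 y}"
  have Cc: "C \<in> components m W" unfolding C_def components_def using inW by auto
  have step: "reach_in m W a b" if "a \<in> W" "b \<in> W" "adj m a b" for a b
    unfolding reach_in_def using that by auto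
  have trans: "reach_in m W a c" if "reach_in m W a b" "reach_in m W b c" for a b c
    using that unfolding reach_in_def by auto
  have r2: "reach_in m W v1 v2" using step inW s by auto
  have r3: "reach_in m W v1 v3" using trans[OF r2 step] inW s by auto
  have "v1 \<in> C" "v3 \<in> C" using r3 inW unfolding C_def reach_in_def by auto
  have XV: "X \<subseteq> V" "card X \<le> k" using fe unfolding feasible_def by auto
  have "induces_clique m C \<or> induces_tree m C" using fe Cc unfolding feasible_def W_def by auto
  moreover have "\<not> induces_clique m C"
  proof
    assume "induces_clique m C"
    hence "m v1 v3 = 1" using \<open>v1 \<in> C\<close> \<open>v3 \<in> C\<close> s(5) unfolding induces_clique_def adj_def
      by force
    thus False using s(4) unfolding adj_def by simp
  qed
  moreover have "\<not> induces_tree m C"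
  proof
    assume T: "induces_tree m C"
    have ld: "large_dense V m k v1" using S(1) s(1) unfolding V_ld_def by auto
    have "v1 \<notin> X" using inW W_def by auto
    then obtain u1 u2 where u: "u1 \<in> W" "u2 \<in> W" "adj m v1 u1" "adj m u1 u2" "adj m v1 u2"
      using triangle[OF mg ld XV] unfolding W_def nbhd_def by auto
    have ru1: "reach_in m W v1 u1" using step inW u by auto
    have ru2: "reach_in m W v1 u2" using trans[OF ru1 step] inW u by auto
    have d1: "v1 \<noteq> u1" using adj_irr[OF mg u(3)] .
    have d2: "v1 \<noteq> u2" using adj_irr[OF mg u(5)] .
    have d3: "u1 \<noteq> u2" using adj_irr[OF mg u(4)] .
    have "has_cycle_in m C"
      unfolding has_cycle_in_def
    proof (intro disjI2 exI[of _ "[v1,u1,u2]"] conjI allI impI)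
      show "set [v1, u1, u2] \<subseteq> C" using ru1 ru2 u inW \<open>v1 \<in> C\<close> unfolding C_def by auto
      show "adj m (last [v1, u1, u2]) (hd [v1, u1, u2])" using adj_sym[OF mg u(5)] by simp
      fix i assume "Suc i < length [v1, u1, u2]"
      hence "i = 0 \<or> i = 1" by auto
      thus "adj m ([v1, u1, u2] ! i) ([v1, u1, u2] ! Suc i)" using u by auto
    qed (use d1 d2 d3 in auto)
    thus False using T unfolding induces_tree_def by auto
  qed
  ultimately show False by blast
qed

theorem mainTheorem12:
  fixes V :: "'a set" and m :: "'a \<Rightarrow> 'a \<Rightarrow> nat" and k :: nat
  assumes "multigraph V m"
    and no_flower: "\<not> (\<exists>v \<in> V_ld V m k. \<exists>F. card F = k + 1 \<and>
            (\<forall>S \<in> F. S \<subseteq> V_ld V m k \<and> induces_P3 m S) \<and>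
            (\<forall>S \<in> F. \<forall>T \<in> F. S \<noteq> T \<longrightarrow> S \<inter> T = {v}))"
    and "finite P" and "card P > k ^ 2"
    and "\<forall>S \<in> P. S \<subseteq> V_ld V m k \<and> induces_P3 m S"
    and "\<forall>S \<in> P. \<forall>T \<in> P. S \<noteq> T \<longrightarrow> card (S \<inter> T) \<le> 1"
  shows "\<not> yes_instance V m k"
proof
  assume "yes_instance V m k"
  then obtain X where fe: "feasible V m k X" unfolding yes_instance_def by auto
  have XV: "X \<subseteq> V" "card X \<le> k" using fe unfolding feasible_def by auto
  have finX: "finite X" using XV assms(1) finite_subset unfolding multigraph_def by auto
  have sub: "P \<subseteq> (\<Union>x\<in>X. {S \<in> P. x \<in> S})"
  proof
    fix S assume "S \<in> P"
    have "S \<inter> X \<noteq> {}" using hit[OF assms(1) fe] assms(5) \<open>S \<in> P\<close> by auto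
    then obtain x where "x \<in> S" "x \<in> X" by auto
    thus "S \<in> (\<Union>x\<in>X. {S \<in> P. x \<in> S})" using \<open>S \<in> P\<close> by auto
  qed
  have each: "card {S \<in> P. x \<in> S} \<le> k" if "x \<in> X" for x
  proof (rule ccontr)
    assume "\<not> ?thesis"
    then obtain F where F: "F \<subseteq> {S \<in> P. x \<in> S}" "card F = k + 1"
      using obtain_subset_with_card_n[of "k+1" "{S \<in> P. x \<in> S}"] by auto
    have "F \<noteq> {}" using F(2) by auto
    then obtain S0 where "S0 \<in> F" by auto
    hence xld: "x \<in> V_ld V m k" using F(1) assms(5) by auto
    have finS: "finite S" if "S \<in> P" for S
      using assms(5) that unfolding induces_P3_def by auto
    have "\<forall>S \<in> F. \<forall>T \<in> F. S \<noteq> T \<longrightarrow> S \<inter> T = {x}"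
    proof (intro ballI impI)
      fix S T assume ST: "S \<in> F" "T \<in> F" "S \<noteq> T"
      have c: "card (S \<inter> T) \<le> 1" using assms(6) ST F(1) by auto
      have xi: "x \<in> S \<inter> T" using ST F(1) by auto
      have fi: "finite (S \<inter> T)" using finS ST F(1) by auto
      show "S \<inter> T = {x}" 
      proof (rule ccontr)
        assume "S \<inter> T \<noteq> {x}"
        then obtain y where "y \<in> S \<inter> T" "y \<noteq> x" using xi by auto
        hence "card {x, y} \<le> card (S \<inter> T)" using xi fi by (intro card_mono) auto
        thus False using c \<open>y \<noteq> x\<close> by simp
      qed
    qed
    moreover have "\<forall>S \<in> F. S \<subseteq> V_ld V m k \<and> induces_P3 m S" using F(1) assms(5) by auto
    ultimately have "\<exists>v \<in> V_ld V m k. \<exists>F. card F = k + 1 \<and>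
            (\<forall>S \<in> F. S \<subseteq> V_ld V m k \<and> induces_P3 m S) \<and>
            (\<forall>S \<in> F. \<forall>T \<in> F. S \<noteq> T \<longrightarrow> S \<inter> T = {v})"
      using xld F(2) by (intro bexI[of _ x] exI[of _ F]) auto
    thus False using no_flower by blast
  qed
  have "card P \<le> card (\<Union>x\<in>X. {S \<in> P. x \<in> S})"
    by (rule card_mono) (use finX assms(3) sub in auto)
  also have "\<dots> \<le> (\<Sum>x\<in>X. card {S \<in> P. x \<in> S})" by (rule card_UN_le[OF finX])
  also have "\<dots> \<le> (\<Sum>x\<in>X. k)" by (rule sum_mono) (use each in auto)
  also have "\<dots> = card X * k" by simp
  also have "\<dots> \<le> k * k" using XV by simp
  finally show False using assms(4) by (simp add: power2_eq_square)
qed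

end
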